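(* Let $X$ be a scattered topological space such that $\mathrm{Homeo}(X)$ is fully transitive, and assume each similarity class of $X$ is infinite. Then $\mathrm{Homeo}(X)$ is topologically perfect.
   Context: A topological space (not assumed Hausdorff) is scattered if every nonempty subset has a point isolated in that subset. For scattered $X$, $\mathrm{Homeo}(X)$ carries the topology of pointwise convergence on $X$. Two points $x,y\in X$ are similar if there are neighbourhoods $U_x\ni x$, $U_y\ni y$ and a homeomorphism $h\colon U_x\to U_y$ with $h(x)=y$; the equivalence classes are similarity classes. $\mathrm{Homeo}(X)$ is fully transitive if for every $k$ and all $k$-tuples of pairwise distinct points $(x_1,\dots,x_k)$, $(y_1,\dots,y_k)$ with $x_i$ similar to $y_i$, some homeomorphism $g$ satisfies $g(x_i)=y_i$ for all $i$. A topological group is topologically perfect if its derived subgroup is dense. *)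

theory Defs
  imports "HOL-Analysis.Analysis" "HOL-Algebra.Generated_Groups"
begin

definition scattered_space :: "'a topology \<Rightarrow> bool" where
  "scattered_space X \<longleftrightarrow>
     (\<forall>S. S \<subseteq> topspace X \<and> S \<noteq> {} \<longrightarrow>
        (\<exists>x\<in>S. \<exists>U. openin X U \<and> U \<inter> S = {x}))"

definition homeo_group :: "'a topology \<Rightarrow> ('a \<Rightarrow> 'a) monoid" where
  "homeo_group X =
     \<lparr>carrier = {f. f \<in> extensional (topspace X) \<and> homeomorphic_map X X f},
      mult = (\<lambda>g f. compose (topspace X) g f),
      one = restrict id (topspace X)\<rparr>"

definition pointwise_topology :: "'a topology \<Rightarrow> ('a \<Rightarrow> 'a) topology" where
  "pointwise_topology X = product_topology (\<lambda>_. X) (topspace X)"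

definition similar_pts :: "'a topology \<Rightarrow> 'a \<Rightarrow> 'a \<Rightarrow> bool" where
  "similar_pts X x y \<longleftrightarrow>
     (\<exists>U V h. openin X U \<and> openin X V \<and> x \<in> U \<and> y \<in> V \<and>
        homeomorphic_map (subtopology X U) (subtopology X V) h \<and> h x = y)"

definition fully_transitive :: "'a topology \<Rightarrow> bool" where
  "fully_transitive X \<longleftrightarrow>
     (\<forall>xs ys. length xs = length ys \<and> distinct xs \<and> distinct ys \<and>
        set xs \<subseteq> topspace X \<and> set ys \<subseteq> topspace X \<and>
        (\<forall>i<length xs. similar_pts X (xs ! i) (ys ! i)) \<longrightarrow>
        (\<exists>g\<in>carrier (homeo_group X). \<forall>i<length xs. g (xs ! i) = ys ! i))"

definition topologically_perfect_homeo :: "'a topology \<Rightarrow> bool" where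
  "topologically_perfect_homeo X \<longleftrightarrow>
     (subtopology (pointwise_topology X) (carrier (homeo_group X))) closure_of
        (derived (homeo_group X) (carrier (homeo_group X)))
     = carrier (homeo_group X)"

end

theory Submission
  imports Defs
begin

lemma hg_carrier_props:
  assumes "h \<in> carrier (homeo_group X)"
  shows "h \<in> extensional (topspace X)" "homeomorphic_map X X h"
    "h ` topspace X = topspace X" "inj_on h (topspace X)"
    "\<And>x. x \<in> topspace X \<Longrightarrow> h x \<in> topspace X"
  using assms unfolding homeo_group_def
  by (auto simp: homeomorphic_eq_everything_map)

lemma homeo_group_is_group: "group (homeo_group X)"
proof (rule groupI)
  fix x y assume x: "x \<in> carrier (homeo_group X)" and y: "y \<in> carrier (homeo_group X)"
  have "homeomorphic_map X X (x \<circ> y)"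
    using hg_carrier_props(2)[OF x] hg_carrier_props(2)[OF y] homeomorphic_map_compose by blast
  then have "homeomorphic_map X X (compose (topspace X) x y)"
    by (rule homeomorphic_map_eq) (simp add: compose_def)
  then show "x \<otimes>\<^bsub>homeo_group X\<^esub> y \<in> carrier (homeo_group X)"
    by (simp add: homeo_group_def compose_def)
next
  show "\<one>\<^bsub>homeo_group X\<^esub> \<in> carrier (homeo_group X)"
    unfolding homeo_group_def
    by (auto intro: homeomorphic_map_eq[of X X id])
next
  fix x y z assume "x \<in> carrier (homeo_group X)" "y \<in> carrier (homeo_group X)"
    and z: "z \<in> carrier (homeo_group X)"
  then show "x \<otimes>\<^bsub>homeo_group X\<^esub> y \<otimes>\<^bsub>homeo_group X\<^esub> z =
       x \<otimes>\<^bsub>homeo_group X\<^esub> (y \<otimes>\<^bsub>homeo_group X\<^esub> z)"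
    using hg_carrier_props(5)[OF z]
    by (auto simp: homeo_group_def compose_def restrict_def fun_eq_iff)
next
  fix x assume x: "x \<in> carrier (homeo_group X)"
  then show "\<one>\<^bsub>homeo_group X\<^esub> \<otimes>\<^bsub>homeo_group X\<^esub> x = x"
    using hg_carrier_props(1,5)[OF x]
    by (auto simp: homeo_group_def compose_def restrict_def fun_eq_iff extensional_def)
next
  fix x assume x: "x \<in> carrier (homeo_group X)"
  obtain g where g: "homeomorphic_maps X X x g"
    using hg_carrier_props(2)[OF x] homeomorphic_map_maps by blast
  let ?y = "restrict g (topspace X)"
  have "homeomorphic_map X X g" using g homeomorphic_maps_map by blast
  then have "homeomorphic_map X X ?y" by (rule homeomorphic_map_eq) simp
  then have "?y \<in> carrier (homeo_group X)" by (simp add: homeo_group_def)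
  moreover have "?y \<otimes>\<^bsub>homeo_group X\<^esub> x = \<one>\<^bsub>homeo_group X\<^esub>"
    using g hg_carrier_props(5)[OF x]
    by (auto simp: homeo_group_def compose_def restrict_def fun_eq_iff homeomorphic_maps_def)
  ultimately show "\<exists>y\<in>carrier (homeo_group X). y \<otimes>\<^bsub>homeo_group X\<^esub> x = \<one>\<^bsub>homeo_group X\<^esub>"
    by blast
qed

lemma inv_apply:
  assumes "g \<in> carrier (homeo_group X)" "y \<in> topspace X"
  shows "(inv\<^bsub>homeo_group X\<^esub> g) (g y) = y"
proof -
  interpret group "homeo_group X" by (rule homeo_group_is_group)
  have "inv\<^bsub>homeo_group X\<^esub> g \<otimes>\<^bsub>homeo_group X\<^esub> g = \<one>\<^bsub>homeo_group X\<^esub>"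
    using assms(1) by simp
  then have "(inv\<^bsub>homeo_group X\<^esub> g \<otimes>\<^bsub>homeo_group X\<^esub> g) y = \<one>\<^bsub>homeo_group X\<^esub> y" by simp
  then show ?thesis using assms(2) by (simp add: homeo_group_def compose_def)
qed

lemma similar_refl: "x \<in> topspace X \<Longrightarrow> similar_pts X x x"
  unfolding similar_pts_def
  by (rule exI[of _ "topspace X"], rule exI[of _ "topspace X"], rule exI[of _ id]) auto

lemma similar_homeo: "homeomorphic_map X X f \<Longrightarrow> x \<in> topspace X \<Longrightarrow> similar_pts X x (f x)"
  unfolding similar_pts_def
  by (rule exI[of _ "topspace X"], rule exI[of _ "topspace X"], rule exI[of _ f])
     (auto simp: homeomorphic_eq_everything_map)

lemma similar_sym: "similar_pts X x y \<Longrightarrow> similar_pts X y x"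
proof -
  assume "similar_pts X x y"
  then obtain U V h where UV: "openin X U" "openin X V" "x \<in> U" "y \<in> V"
    and h: "homeomorphic_map (subtopology X U) (subtopology X V) h" "h x = y"
    unfolding similar_pts_def by blast
  obtain g where g: "homeomorphic_maps (subtopology X U) (subtopology X V) h g"
    using h homeomorphic_map_maps by blast
  have "x \<in> topspace (subtopology X U)" using UV openin_subset by fastforce
  then have "g y = x" using g h(2) by (auto simp: homeomorphic_maps_def)
  moreover have "homeomorphic_map (subtopology X V) (subtopology X U) g"
    using g homeomorphic_maps_map by blast
  ultimately show ?thesis using UV unfolding similar_pts_def by blast
qed

lemma fresh_list:
  assumes inf: "\<forall>x\<in>topspace X. infinite {y \<in> topspace X. similar_pts X x y}"
    and B: "finite B"
  shows "set xs \<subseteq> topspace X \<Longrightarrow> \<exists>zs. length zs = length xs \<and> distinct zs \<and>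
     set zs \<subseteq> topspace X \<and> set zs \<inter> B = {} \<and>
     (\<forall>i<length xs. similar_pts X (xs!i) (zs!i))"
proof (induction xs)
  case Nil
  then show ?case by auto
next
  case (Cons x xs)
  then obtain zs where zs: "length zs = length xs" "distinct zs"
     "set zs \<subseteq> topspace X" "set zs \<inter> B = {}"
     "\<forall>i<length xs. similar_pts X (xs!i) (zs!i)" by auto
  have "x \<in> topspace X" using Cons by auto
  then have "infinite ({y \<in> topspace X. similar_pts X x y} - (B \<union> set zs))"
    using inf B by (simp add: Diff_infinite_finite)
  then obtain z where "z \<in> {y \<in> topspace X. similar_pts X x y} - (B \<union> set zs)"
    using infinite_imp_nonempty by blast
  then have z: "z \<in> topspace X" "similar_pts X x z" "z \<notin> B" "z \<notin> set zs"
    by auto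
  show ?case
    apply (rule exI[of _ "z # zs"])
    using zs z by (auto simp: nth_Cons split: nat.split)
qed

theorem proposition17:
  fixes X :: "'a topology"
  assumes "scattered_space X"
    and "fully_transitive X"
    and "\<forall>x\<in>topspace X. infinite {y \<in> topspace X. similar_pts X x y}"
  shows "topologically_perfect_homeo X"
proof -
  let ?G = "homeo_group X"
  let ?P = "subtopology (pointwise_topology X) (carrier ?G)"
  interpret G: group ?G by (rule homeo_group_is_group)
  have Gtop: "carrier ?G \<subseteq> topspace (pointwise_topology X)"
    using hg_carrier_props(1,5)
    by (force simp: pointwise_topology_def topspace_product_topology PiE_iff)
  have topP: "topspace ?P = carrier ?G" using Gtop by auto
  have dsub: "derived ?G (carrier ?G) \<subseteq> carrier ?G"
    unfolding derived_def by (rule G.generate_incl) (auto)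
  have "carrier ?G \<subseteq> ?P closure_of derived ?G (carrier ?G)"
  proof
    fix f assume f: "f \<in> carrier ?G"
    show "f \<in> ?P closure_of derived ?G (carrier ?G)"
      unfolding in_closure_of
    proof (intro conjI allI impI)
      show "f \<in> topspace ?P" using f topP by simp
      fix T assume T: "f \<in> T \<and> openin ?P T"
      then obtain U where U: "openin (pointwise_topology X) U" "T = U \<inter> carrier ?G"
        by (auto simp: openin_subtopology)
      with T obtain V where V: "finite {i \<in> topspace X. V i \<noteq> topspace X}"
        "\<forall>i\<in>topspace X. openin X (V i)" "f \<in> Pi\<^sub>E (topspace X) V"
        "Pi\<^sub>E (topspace X) V \<subseteq> U"
        unfolding pointwise_topology_def openin_product_topology_alt by blast
      define F where "F = {i \<in> topspace X. V i \<noteq> topspace X}"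
      obtain xs where xs: "set xs = F" "distinct xs"
        using V(1) F_def finite_distinct_list by blast
      have xsT: "set xs \<subseteq> topspace X" using xs F_def by auto
      have fF: "finite F" using V(1) unfolding F_def .
      have "finite (F \<union> f ` F)" using fF by blast
      from fresh_list[OF assms(3) this xsT] obtain zs where zs: "length zs = length xs" "distinct zs"
        "set zs \<subseteq> topspace X" "set zs \<inter> (F \<union> f ` F) = {}"
        "\<forall>i<length xs. similar_pts X (xs!i) (zs!i)"
        by blast
      note fprops = hg_carrier_props[OF f]
      have FT: "\<exists>g\<in>carrier ?G. \<forall>i<length us. g (us!i) = vs!i"
        if "length us = length vs" "distinct us" "distinct vs" "set us \<subseteq> topspace X"
          "set vs \<subseteq> topspace X" "\<forall>i<length us. similar_pts X (us ! i) (vs ! i)" for us vs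
        using assms(2) that unfolding fully_transitive_def by blast
      have dys: "distinct (map f xs)"
        using xs xsT fprops(4) by (simp add: distinct_map inj_on_subset)
      have "\<exists>a\<in>carrier ?G. \<forall>i<length (xs @ zs). a ((xs @ zs) ! i) = (map f xs @ zs) ! i"
      proof (rule FT)
        show "length (xs @ zs) = length (map f xs @ zs)" by simp
        show "distinct (xs @ zs)" using xs zs by auto
        show "distinct (map f xs @ zs)" using dys zs xs by auto
        show "set (xs @ zs) \<subseteq> topspace X" using xsT zs by auto
        show "set (map f xs @ zs) \<subseteq> topspace X" using xsT zs fprops(5) by auto
        show "\<forall>i<length (xs @ zs). similar_pts X ((xs @ zs) ! i) ((map f xs @ zs) ! i)"
        proof (intro allI impI)
          fix i assume i: "i < length (xs @ zs)"
          show "similar_pts X ((xs @ zs) ! i) ((map f xs @ zs) ! i)"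
          proof (cases "i < length xs")
            case True
            then have "xs ! i \<in> topspace X" using xsT by auto
            then show ?thesis using True similar_homeo[OF fprops(2)]
              by (simp add: nth_append)
          next
            case False
            then have "zs ! (i - length xs) \<in> topspace X" using i zs by auto
            then show ?thesis using False similar_refl
              by (simp add: nth_append)
          qed
        qed
      qed
      then obtain a where a: "a \<in> carrier ?G"
        "\<forall>i<length (xs @ zs). a ((xs @ zs) ! i) = (map f xs @ zs) ! i" by blast
      have a1: "a (xs!i) = f (xs!i)" and a2: "a (zs!i) = zs!i" if "i < length xs" for i
        using a(2)[rule_format, of i] a(2)[rule_format, of "i + length xs"] that zs(1)
        by (auto simp: nth_append)
      have "\<exists>t\<in>carrier ?G. \<forall>i<length (xs @ zs). t ((xs @ zs) ! i) = (zs @ xs) ! i"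
      proof (rule FT)
        show "length (xs @ zs) = length (zs @ xs)" by simp
        show "distinct (xs @ zs)" using xs zs by auto
        show "distinct (zs @ xs)" using xs zs by auto
        show "set (xs @ zs) \<subseteq> topspace X" using xsT zs by auto
        show "set (zs @ xs) \<subseteq> topspace X" using xsT zs by auto
        show "\<forall>i<length (xs @ zs). similar_pts X ((xs @ zs) ! i) ((zs @ xs) ! i)"
        proof (intro allI impI)
          fix i assume i: "i < length (xs @ zs)"
          show "similar_pts X ((xs @ zs) ! i) ((zs @ xs) ! i)"
          proof (cases "i < length xs")
            case True
            then show ?thesis using zs by (simp add: nth_append)
          next
            case False
            then have "i - length xs < length xs" using i zs by auto
            then have "similar_pts X (xs ! (i - length xs)) (zs ! (i - length xs))"
              using zs(5) by blast
            then show ?thesis using False similar_sym zs(1)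
              by (simp add: nth_append)
          qed
        qed
      qed
      then obtain t where t: "t \<in> carrier ?G"
        "\<forall>i<length (xs @ zs). t ((xs @ zs) ! i) = (zs @ xs) ! i" by blast
      have t2: "t (zs!i) = xs!i" if "i < length xs" for i
        using t(2)[rule_format, of "i + length xs"] that zs(1)
        by (auto simp: nth_append)
      define g where "g = a \<otimes>\<^bsub>?G\<^esub> t \<otimes>\<^bsub>?G\<^esub> inv\<^bsub>?G\<^esub> a \<otimes>\<^bsub>?G\<^esub> inv\<^bsub>?G\<^esub> t"
      have gd: "g \<in> derived ?G (carrier ?G)"
        unfolding derived_def g_def using a(1) t(1) by (blast intro: generate.incl)
      have gC: "g \<in> carrier ?G" using gd dsub by blast
      have gx: "g x = f x" if x: "x \<in> F" for x
      proof -
        obtain i where i: "i < length xs" "x = xs ! i" using x xs by (metis in_set_conv_nth)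
        have zT: "zs ! i \<in> topspace X" using zs i by (simp add: subset_iff)
        have xT: "x \<in> topspace X" using x F_def by simp
        have e1: "(inv\<^bsub>?G\<^esub> t) x = zs ! i"
          using inv_apply[OF t(1) zT] t2[OF i(1)] i by simp
        have e2: "(inv\<^bsub>?G\<^esub> a) (zs ! i) = zs ! i"
          using inv_apply[OF a(1) zT] a2[OF i(1)] by simp
        show ?thesis
          unfolding g_def using xT zT e1 e2 t2[OF i(1)] a1[OF i(1)] i
          by (simp add: homeo_group_def compose_def)
      qed
      have "g \<in> Pi\<^sub>E (topspace X) V"
      proof -
        note gp = hg_carrier_props[OF gC]
        have "g i \<in> V i" if "i \<in> topspace X" for i
        proof (cases "i \<in> F")
          case True
          then show ?thesis using gx V(3) that by auto
        next
          case False
          then show ?thesis using gp(5) that F_def by auto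
        qed
        then show ?thesis using gp(1) by (auto simp: PiE_iff)
      qed
      then show "\<exists>y. y \<in> derived ?G (carrier ?G) \<and> y \<in> T"
        using gd gC V(4) U(2) by blast
    qed
  qed
  moreover have "?P closure_of derived ?G (carrier ?G) \<subseteq> carrier ?G"
    using closure_of_subset_topspace topP by metis
  ultimately show ?thesis unfolding topologically_perfect_homeo_def by blast
qed

end
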